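(* Let $m\ge0$, $r>0$ and $\gamma>0$. If $r\le\sqrt{2/(\gamma m)}$, then for all $0\le\tau<\pi mr/4$, all $d\ge0$ and all $\omega>0$, $$\mathrm{Re}\left((\pi+6j)\left(1+\frac{\gamma}{j\omega\big(mj\omega+d+\tfrac1r e^{-j\omega\tau}\big)}\right)\right)>0.$$
   Context: $j$ denotes the imaginary unit. *)

theory Defs
  imports Complex_Main
begin

end

theory Submission
  imports Defs "HOL-Analysis.Analysis"
begin

lemma nd23: "\<not> Suc (Suc 0) dvd Suc (Suc (Suc 0))" by presburger
lemma fact4: "(fact 4 :: real) = 24" by (simp add: fact_Suc numeral_eq_Suc)
lemma cos_upper: fixes z :: real shows "cos z \<le> 1 - z^2/2 + z^4/24"
proof -
  obtain t where t: "cos z = (\<Sum>m<4. cos_coeff m * z ^ m) + (cos(t + 1/2 * real 4 * pi) / fact 4) * z ^ 4"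
    using Maclaurin_cos_expansion[of z 4] by blast
  have s: "(\<Sum>m<4. cos_coeff m * z ^ m) = 1 - z^2/2"
    by (simp add: eval_nat_numeral cos_coeff_def nd23)
  have "1/2 * real 4 * pi = 2 * pi" by simp
  then have c: "cos(t + 1/2 * real 4 * pi) = cos t"
    by (simp add: cos_add)
  have e: "cos z = 1 - z^2/2 + cos t * z^4 / 24" using t unfolding s c fact4 by simp
  have "cos t * z^4 \<le> 1 * z^4" by (rule mult_right_mono) auto
  then show ?thesis using e by linarith
qed
lemma sin_lower: fixes z :: real assumes "z \<ge> 0" shows "sin z \<ge> z - z^3/6 - z^4/24"
proof -
  have "\<bar>sin z - (\<Sum>m<4. sin_coeff m * z ^ m)\<bar> \<le> inverse (fact 4) * \<bar>z\<bar> ^ 4"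
    by (rule Maclaurin_sin_bound)
  moreover have "(\<Sum>m<4. sin_coeff m * z ^ m) = z - z^3/6"
    by (simp add: eval_nat_numeral sin_coeff_def nd23)
  moreover have "inverse (fact 4) * \<bar>z\<bar> ^ 4 = z^4/24"
    unfolding fact4 using assms by simp
  ultimately have h: "\<bar>sin z - (z - z^3/6)\<bar> \<le> z^4/24" by (simp add: fact4)
  then have "- (sin z - (z - z^3/6)) \<le> z^4/24" by (rule abs_le_D2)
  then show ?thesis by linarith
qed

lemma Qpos:
  fixes P z :: real
  assumes P1: "3.14 \<le> P" and P2: "P \<le> 3.15" and z0: "0 < z" and z1: "z \<le> 0.79"
  shows "3*P^3 + 64*P - (18*P^2+64)*z + (16*P - P^3/4 - P^2/2)*z^2 + (4/3)*P^2*z^3 - (4/3)*P*z^4 > 0"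
proof -
  have P1': "314/100 \<le> P" using P1 by simp
  have P2': "P \<le> 315/100" using P2 by simp
  have z1': "z \<le> 79/100" using z1 by simp
  have P0: "0 \<le> P" using P1' by simp
  have "P^2 \<le> (315/100)^2" by (rule power_mono) (use P0 P2' in auto)
  then have p2u: "P^2 \<le> 993/100" by (simp add: power2_eq_square)
  have "(314/100)^2 \<le> P^2" by (rule power_mono) (use P1' in auto)
  then have p2l: "P^2 \<ge> 985/100" by (simp add: power2_eq_square)
  have "(314/100)^3 \<le> P^3" by (rule power_mono) (use P1' in auto)
  then have p3l: "P^3 \<ge> 3095/100" by (simp add: power3_eq_cube)
  have "P^3 \<le> (315/100)^3" by (rule power_mono) (use P0 P2' in auto)
  then have p3u: "P^3 \<le> 3126/100" by (simp add: power3_eq_cube)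
  have a1: "(18*P^2+64)*z \<le> (18*(993/100)+64) * (79/100)"
    by (rule mult_mono) (use p2u z1' z0 p2l in auto)
  have c2: "16*P - P^3/4 - P^2/2 \<ge> 0" using P1' p3u p2u by linarith
  have a2: "(16*P - P^3/4 - P^2/2)*z^2 \<ge> 0" using c2 by simp
  have a3: "(4/3)*P^2*z^3 \<ge> 0" using z0 by simp
  have z4: "z^4 \<le> 1" using z0 z1' by (simp add: power_le_one)
  have a4: "P*z^4 \<le> (315/100) * 1" by (rule mult_mono) (use P2' z4 z0 in auto)
  define A where "A = (18*P^2+64)*z"
  define B where "B = (16*P - P^3/4 - P^2/2)*z^2"
  define C where "C = (4/3)*P^2*z^3"
  define E where "E = P*z^4"
  define F where "F = P^3"
  have "3*P^3 + 64*P - (18*P^2+64)*z + (16*P - P^3/4 - P^2/2)*z^2 + (4/3)*P^2*z^3 - (4/3)*P*z^4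
     = 3*F + 64*P - A + B + C - (4/3)*E" by (simp add: A_def B_def C_def E_def F_def)
  moreover have "3*F + 64*P - A + B + C - (4/3)*E > 0"
  proof -
    have "A \<le> 19177/100" using a1 by (simp add: A_def)
    moreover have "0 \<le> B" using a2 by (simp add: B_def)
    moreover have "0 \<le> C" using a3 by (simp add: C_def)
    moreover have "E \<le> 315/100" using a4 by (simp add: E_def)
    moreover have "F \<ge> 3095/100" using p3l by (simp add: F_def)
    ultimately show ?thesis using P1' by linarith
  qed
  ultimately show ?thesis by (simp only:)
qed


lemma idt: fixes P z x K S :: real
  assumes "P*x = 2*P - 4*z" "K = 1 - z^2/2 + z^4/24" "S = z - z^3/6 - z^4/24"
  shows "P^2 * (P*(x^2-1)*(x - 2*K) + 12* S)
     = z^2 * (3*P^3 + 64*P - (18*P^2+64)*z + (16*P - P^3/4 - P^2/2)*z^2 + (4/3)*P^2*z^3 - (4/3)*P*z^4)"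
proof -
  have "P^2 * (P*(x^2-1)*(x - 2*K) + 12* S) = ((P*x)^2 - P^2)*(P*x - 2*P*K) + 12*P^2* S"
    by algebra
  also have "\<dots> = ((2*P - 4*z)^2 - P^2)*((2*P - 4*z) - 2*P*(1 - z^2/2 + z^4/24)) + 12*P^2*(z - z^3/6 - z^4/24)"
    using assms by simp
  also have "\<dots> = z^2 * (3*P^3 + 64*P - (18*P^2+64)*z + (16*P - P^3/4 - P^2/2)*z^2 + (4/3)*P^2*z^3 - (4/3)*P*z^4)"
    by (simp add: algebra_simps power2_eq_square power3_eq_cube power4_eq_xxxx)
  finally show ?thesis .
qed
lemma poly:
  fixes z :: real
  assumes z0: "0 < z" and zp: "z < pi/4"
  shows "pi*((2 - 4*z/pi)^2 - 1)*((2 - 4*z/pi) - 2*cos z) + 12 * sin z > 0"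
proof -
  define P where "P = pi"
  define x where "x = 2 - 4*z/P"
  define K where "K = 1 - z^2/2 + z^4/24"
  define S where "S = z - z^3/6 - z^4/24"
  have P0: "P > 0" by (simp add: P_def)
  have P1: "3.14 \<le> P" "P \<le> 3.15" using pi_approx by (auto simp: P_def)
  have zP: "z < P/4" using zp by (simp add: P_def)
  have Px: "P*x = 2*P - 4*z" using P0 by (simp add: x_def algebra_simps)
  have "4*z < P" using zP by linarith
  then have "4*z/P < 1" using P0 by simp
  then have x1: "x > 1" by (simp add: x_def)
  have "x^2 > 1" using x1 by (simp add: less_1_mult power2_eq_square)
  then have h1: "P*(x^2-1) > 0" using P0 by simp
  have "K \<ge> cos z" using cos_upper[of z] by (simp add: K_def)
  then have "x - 2*K \<le> x - 2*cos z" by simp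
  then have e1: "P*(x^2-1)*(x - 2*cos z) \<ge> P*(x^2-1)*(x - 2*K)"
    using h1 by (intro mult_left_mono) auto
  have "S \<le> sin z" using sin_lower[of z] z0 by (simp add: S_def)
  then have e2: "12 * sin z \<ge> 12 * S" by simp
  have "P \<le> 315/100" using P1 by simp
  then have z79': "z \<le> 79/100" using zP by linarith
  then have z79: "z \<le> 0.79" by simp
  have Q: "3*P^3 + 64*P - (18*P^2+64)*z + (16*P - P^3/4 - P^2/2)*z^2 + (4/3)*P^2*z^3 - (4/3)*P*z^4 > 0"
    by (rule Qpos[OF P1 z0 z79])
  have zq: "0 < z^2 * (3*P^3 + 64*P - (18*P^2+64)*z + (16*P - P^3/4 - P^2/2)*z^2 + (4/3)*P^2*z^3 - (4/3)*P*z^4)"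
    by (rule mult_pos_pos) (use z0 Q in auto)
  have "0 < P^2 * (P*(x^2-1)*(x - 2*K) + 12 * S)"
    by (subst idt[OF Px K_def S_def]) (rule zq)
  then have v: "0 < P*(x^2-1)*(x - 2*K) + 12 * S"
    by (rule zero_less_mult_pos) (use P0 in auto)
  have "P*(x^2-1)*(x - 2*K) + 12 * S \<le> P*(x^2-1)*(x - 2*cos z) + 12 * sin z"
    by (rule add_mono[OF e1 e2])
  with v have "P*(x^2-1)*(x - 2*cos z) + 12 * sin z > 0" by (rule less_le_trans)
  then show ?thesis unfolding x_def P_def .
qed


lemma core_id:
  fixes x s k c :: real
  assumes "s^2 + k^2 = 1"
  shows "pi * x * ((s - x)^2 + c^2) + 2 * (pi * (s - x) + 6 * c)
       = pi * (x^2 - 1) * (x - 2* s) + 12 * k + (pi * x * (c^2 - k^2) + 12 * (c - k))"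
proof -
  have "pi * x * ((s - x)^2 + c^2) + 2 * (pi * (s - x) + 6 * c)
       - (pi * (x^2 - 1) * (x - 2* s) + 12 * k + (pi * x * (c^2 - k^2) + 12 * (c - k)))
       = pi * x * (s^2 + k^2 - 1)"
    by (simp add: algebra_simps power2_eq_square power3_eq_cube)
  then show ?thesis using assms by simp
qed

lemma core_id2:
  fixes x s c :: real
  shows "pi * x * ((s - x)^2 + c^2) + 2 * (pi * (s - x) + 6 * c)
       = pi * ((x - s) * (x * (x - s) - 2)) + pi * x * c^2 + 12 * c"
  by (simp add: algebra_simps power2_eq_square)

lemma caseA:
  fixes x \<theta> c :: real
  assumes x0: "x > 0" and t0: "0 \<le> \<theta>" and tx: "\<theta> < pi * x / 4" and ck: "c \<ge> cos \<theta>"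
    and th: "\<theta> \<le> pi/2"
  shows "pi * (x^2 - 1) * (x - 2 * sin \<theta>) + 12 * cos \<theta> > 0"
proof -
  have k0: "cos \<theta> \<ge> 0" using t0 th by (intro cos_ge_zero) auto
  have s0: "sin \<theta> \<ge> 0" using t0 th by (intro sin_ge_zero) auto
  have s1: "sin \<theta> \<le> 1" by simp
  consider "x \<ge> 2" | "x \<le> 1" | "1 < x \<and> x < 2" by linarith
  then show ?thesis
  proof cases
    case 1
    have nn: "pi * (x^2 - 1) * (x - 2 * sin \<theta>) \<ge> 0"
    proof -
      have "x^2 \<ge> 1" using 1 by (simp add: one_le_power)
      moreover have "x - 2 * sin \<theta> \<ge> 0" using 1 s1 by linarith
      ultimately show ?thesis by simp
    qed
    show ?thesis
    proof (cases "\<theta> < pi/2")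
      case True
      have "cos \<theta> > 0"
      proof (cases "\<theta> = 0")
        case True then show ?thesis by simp
      next
        case False then show ?thesis using t0 \<open>\<theta> < pi/2\<close> by (intro cos_gt_zero) auto
      qed
      then show ?thesis using nn by linarith
    next
      case False
      then have "\<theta> = pi/2" using th by simp
      have "sin \<theta> = 1" unfolding \<open>\<theta> = pi/2\<close> by simp
      have "pi/2 < pi * x / 4" using tx \<open>\<theta> = pi/2\<close> by simp
      then have "x > 2" by (simp add: field_simps)
      then have "x^2 > 1" by (simp add: one_less_power)
      moreover have "x - 2 * sin \<theta> > 0" using \<open>x > 2\<close> \<open>sin \<theta> = 1\<close> by simp
      ultimately have "pi * (x^2 - 1) * (x - 2 * sin \<theta>) > 0" by simp
      then show ?thesis using k0 by linarith
    qed
  next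
    case 2
    have "pi * x \<le> pi * 1" using 2 by (intro mult_left_mono) auto
    then have "\<theta> < pi/4" using tx by linarith
    then have "cos (pi/3) < cos \<theta>" using t0 by (intro cos_monotone_0_pi) auto
    then have k2: "cos \<theta> > 1/2" by (simp add: cos_60)
    have "0 \<le> 1 - x^2" using 2 x0 by (simp add: power_le_one)
    have "2 * sin \<theta> - x \<ge> -1" using s0 2 by linarith
    then have "(1 - x^2) * (2 * sin \<theta> - x) \<ge> (1 - x^2) * (-1)"
      using \<open>0 \<le> 1 - x^2\<close> by (intro mult_left_mono) auto
    moreover have "(1 - x^2) * (-1) \<ge> -1" using x0 by simp
    ultimately have "(1 - x^2) * (2 * sin \<theta> - x) \<ge> -1" by linarith
    then have "pi * ((1 - x^2) * (2 * sin \<theta> - x)) \<ge> pi * (-1)" by (intro mult_left_mono) auto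
    then have "pi * (x^2 - 1) * (x - 2 * sin \<theta>) \<ge> - pi"
      by (simp add: algebra_simps)
    then show ?thesis using k2 pi_less_4 by linarith
  next
    case 3
    define z where "z = pi/2 - pi * x / 4"
    have z0: "0 < z" using 3 by (simp add: z_def field_simps)
    have z1: "z < pi/4" using 3 by (simp add: z_def field_simps)
    have xz: "2 - 4*z/pi = x" by (simp add: z_def field_simps)
    have cz: "cos z = sin (pi * x / 4)" by (simp add: z_def cos_diff)
    have sz: "sin z = cos (pi * x / 4)" by (simp add: z_def sin_diff)
    have P: "pi*((2 - 4*z/pi)^2 - 1)*((2 - 4*z/pi) - 2*cos z) + 12 * sin z > 0" by (rule poly[OF z0 z1])
    have "pi * x / 4 \<le> pi/2" using 3 by (simp add: field_simps)
    have ss: "sin \<theta> \<le> sin (pi * x / 4)"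
      by (rule sin_monotone_2pi_le) (use t0 tx \<open>pi * x / 4 \<le> pi/2\<close> pi_gt_zero in linarith)+
    have kk: "cos (pi * x / 4) \<le> cos \<theta>"
      by (rule cos_monotone_0_pi_le) (use t0 tx \<open>pi * x / 4 \<le> pi/2\<close> in auto)
    have "x^2 > 1" using 3 by (simp add: one_less_power)
    then have px: "pi * (x^2 - 1) > 0" by simp
    have "pi * (x^2 - 1) * (x - 2 * sin (pi * x / 4)) \<le> pi * (x^2 - 1) * (x - 2 * sin \<theta>)"
      by (rule mult_left_mono) (use ss px in auto)
    moreover have "pi * (x^2 - 1) * (x - 2 * sin (pi * x / 4)) + 12 * cos (pi * x / 4) > 0"
      using P unfolding xz cz sz by simp
    ultimately show ?thesis using kk by linarith
  qed
qed

lemma core: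
  fixes x \<theta> c :: real
  assumes x0: "x > 0" and t0: "0 \<le> \<theta>" and tx: "\<theta> < pi * x / 4" and ck: "c \<ge> cos \<theta>"
  shows "pi * x * ((sin \<theta> - x)^2 + c^2) + 2 * (pi * (sin \<theta> - x) + 6 * c) > 0"
proof -
  consider "\<theta> \<le> pi/2" | "pi/2 < \<theta> \<and> \<theta> \<le> pi" | "\<theta> > pi" by linarith
  then show ?thesis
  proof cases
    case 1
    have k0: "cos \<theta> \<ge> 0" using t0 1 by (intro cos_ge_zero) auto
    have G: "pi * (x^2 - 1) * (x - 2 * sin \<theta>) + 12 * cos \<theta> > 0"
      by (rule caseA[OF x0 t0 tx ck 1])
    have "c^2 \<ge> (cos \<theta>)^2" using ck k0 by (intro power_mono) auto
    then have "pi * x * (c^2 - (cos \<theta>)^2) \<ge> 0" using x0 by simp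
    moreover have "12 * (c - cos \<theta>) \<ge> 0" using ck by simp
    ultimately show ?thesis
      unfolding core_id[of "sin \<theta>" "cos \<theta>" x c, OF sin_cos_squared_add] using G by linarith
  next
    case 2
    define \<phi> where "\<phi> = \<theta> - pi/2"
    define \<alpha> where "\<alpha> = 4 * \<phi> / pi"
    have ph0: "\<phi> \<ge> 0" using 2 by (simp add: \<phi>_def)
    have al0: "\<alpha> \<ge> 0" using ph0 by (simp add: \<alpha>_def)
    have pa: "pi * \<alpha> = 4 * \<phi>" by (simp add: \<alpha>_def)
    have kc: "cos \<theta> = - sin \<phi>" by (simp add: \<phi>_def cos_diff sin_diff)
    have "sin \<phi> \<le> \<phi>" using ph0 by (rule sin_x_le_x)
    then have k: "cos \<theta> \<ge> - \<phi>" using kc by simp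
    have "pi * x / 4 > pi/2 + \<phi>" using tx by (simp add: \<phi>_def)
    then have "pi * x > pi * (2 + \<alpha>)" using pa by (simp add: algebra_simps)
    then have xa: "x > 2 + \<alpha>" by simp
    define u where "u = x - sin \<theta>"
    have ua: "u > 1 + \<alpha>" using xa sin_le_one[of \<theta>] unfolding u_def by linarith
    have "x * u > (2 + \<alpha>) * (1 + \<alpha>)"
      by (rule mult_strict_mono) (use xa ua al0 in auto)
    moreover have "(2 + \<alpha>) * (1 + \<alpha>) \<ge> 2 + 3 * \<alpha>" using al0 by (simp add: algebra_simps)
    ultimately have xu: "x * u - 2 > 3 * \<alpha>" by linarith
    have "u * (x * u - 2) \<ge> 1 * (x * u - 2)"
      by (rule mult_right_mono) (use ua al0 xu in auto)
    then have "u * (x * u - 2) \<ge> x * u - 2" by simp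
    then have "u * (x * u - 2) > 3 * \<alpha>" using xu by linarith
    then have "pi * (u * (x * u - 2)) > pi * (3 * \<alpha>)" by simp
    then have A: "pi * (u * (x * u - 2)) > 12 * \<phi>" using pa by linarith
    have B: "pi * x * c^2 \<ge> 0" using x0 by simp
    have C: "12 * c \<ge> - 12 * \<phi>" using ck k by linarith
    show ?thesis unfolding core_id2 u_def[symmetric] using A B C by linarith
  next
    case 3
    have "pi * x / 4 > pi" using tx 3 by linarith
    then have "pi * x > pi * 4" by simp
    then have x4: "x > 4" by simp
    define u where "u = x - sin \<theta>"
    have ua: "u \<ge> 3" using x4 sin_le_one[of \<theta>] unfolding u_def by linarith
    have "x * u \<ge> 4 * 3" by (rule mult_mono) (use x4 ua in auto)
    then have xu: "x * u - 2 \<ge> 10" by linarith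
    have "u * (x * u - 2) \<ge> 3 * 10" by (rule mult_mono) (use ua xu in auto)
    then have "pi * (u * (x * u - 2)) \<ge> pi * 30" by (intro mult_left_mono) auto
    then have A: "pi * (u * (x * u - 2)) > 12" using pi_gt3 by linarith
    have B: "pi * x * c^2 \<ge> 0" using x0 by simp
    have C: "12 * c \<ge> - 12" using ck cos_ge_minus_one[of \<theta>] by linarith
    show ?thesis unfolding core_id2 u_def[symmetric] using A B C by linarith
  qed
qed


theorem lemma7:
  fixes m r \<gamma> :: real
  assumes "m \<ge> 0" and "r > 0" and "\<gamma> > 0"
    and "r \<le> sqrt (2 / (\<gamma> * m))"
  shows "\<forall>\<tau> d \<omega> :: real. 0 \<le> \<tau> \<longrightarrow> \<tau> < pi * m * r / 4 \<longrightarrow> d \<ge> 0 \<longrightarrow> \<omega> > 0 \<longrightarrow>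
    Re ((complex_of_real pi + 6 * \<i>) *
        (1 + complex_of_real \<gamma> /
           (\<i> * complex_of_real \<omega> *
             (complex_of_real m * \<i> * complex_of_real \<omega> + complex_of_real d
               + (1 / complex_of_real r) * exp (- \<i> * complex_of_real \<omega> * complex_of_real \<tau>))))) > 0"
proof (intro allI impI)
  fix \<tau> d \<omega> :: real
  assume t0: "0 \<le> \<tau>" and t1: "\<tau> < pi * m * r / 4" and d0: "d \<ge> 0" and w0: "\<omega> > 0"
  have m0: "m > 0"
  proof (rule ccontr)
    assume "\<not> m > 0" then have "m = 0" using assms(1) by simp
    then show False using assms(2,4) by simp
  qed
  have "r^2 \<le> 2 / (\<gamma> * m)"
    using assms(2,4) m0 assms(3)
    by (metis less_imp_le power_mono real_sqrt_pow2 zero_le_divide_iff mult_nonneg_nonneg zero_le_numeral)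
  then have gm: "\<gamma> * m * r^2 \<le> 2" using m0 assms(3) by (simp add: field_simps)
  define \<theta> where "\<theta> = \<omega> * \<tau>"
  define a where "a = - m * \<omega>^2 + \<omega> / r * sin \<theta>"
  define b where "b = \<omega> * (d + cos \<theta> / r)"
  have ex: "exp (- \<i> * complex_of_real \<omega> * complex_of_real \<tau>) = Complex (cos \<theta>) (- sin \<theta>)"
    by (simp add: complex_eq_iff Re_exp Im_exp \<theta>_def)
  have D: "\<i> * complex_of_real \<omega> *
             (complex_of_real m * \<i> * complex_of_real \<omega> + complex_of_real d
               + (1 / complex_of_real r) * exp (- \<i> * complex_of_real \<omega> * complex_of_real \<tau>)) = Complex a b"
    unfolding ex by (simp add: complex_eq_iff a_def b_def power2_eq_square field_simps)
  have R: "Re ((complex_of_real pi + 6 * \<i>) * (1 + complex_of_real \<gamma> / Complex a b))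
     = pi + \<gamma> * (pi * a + 6 * b) / (a^2 + b^2)"
    by (simp add: Re_divide Im_divide power2_eq_square field_simps, simp add: add_divide_distrib)
  show "Re ((complex_of_real pi + 6 * \<i>) *
        (1 + complex_of_real \<gamma> /
           (\<i> * complex_of_real \<omega> *
             (complex_of_real m * \<i> * complex_of_real \<omega> + complex_of_real d
               + (1 / complex_of_real r) * exp (- \<i> * complex_of_real \<omega> * complex_of_real \<tau>))))) > 0"
    unfolding D R
  proof (cases "a^2 + b^2 = 0")
    case True then show "pi + \<gamma> * (pi * a + 6 * b) / (a^2 + b^2) > 0" by simp
  next
    case False
    then have pos: "a^2 + b^2 > 0" by (simp add: add_pos_nonneg less_le)
    define x where "x = m * \<omega> * r"
    define c where "c = r * d + cos \<theta>"
    have x0: "x > 0" using m0 w0 assms(2) by (simp add: x_def)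
    have th: "\<theta> < pi * x / 4"
    proof -
      have "\<omega> * \<tau> < \<omega> * (pi * m * r / 4)" using t1 w0 by simp
      then show ?thesis by (simp add: \<theta>_def x_def algebra_simps)
    qed
    have cc: "c \<ge> cos \<theta>" using d0 assms(2) by (simp add: c_def)
    have F: "pi * x * ((sin \<theta> - x)^2 + c^2) + 2 * (pi * (sin \<theta> - x) + 6 * c) > 0"
      using core[OF x0 _ th cc] t0 w0 by (simp add: \<theta>_def)
    have aa: "a = \<omega> * (sin \<theta> - x) / r" using assms(2) by (simp add: a_def x_def field_simps power2_eq_square)
    have bb: "b = \<omega> * c / r" using assms(2) by (simp add: b_def c_def field_simps)
    have key: "pi * (a^2 + b^2) + \<gamma> * (pi * a + 6 * b) > 0"
    proof (cases "pi * a + 6 * b \<ge> 0")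
      case True
      then show ?thesis using pos assms(3) by (simp add: add_pos_nonneg)
    next
      case False
      have "\<gamma> * (pi * a + 6 * b) \<ge> (2 / (m * r^2)) * (pi * a + 6 * b)"
      proof -
        have "\<gamma> \<le> 2 / (m * r^2)" using gm m0 assms(2) by (simp add: field_simps)
        then show ?thesis using False by (intro mult_right_mono_neg) auto
      qed
      moreover have "pi * (a^2 + b^2) + (2 / (m * r^2)) * (pi * a + 6 * b)
          = \<omega>^2 / (x * r^2) * (pi * x * ((sin \<theta> - x)^2 + c^2) + 2 * (pi * (sin \<theta> - x) + 6 * c))"
        unfolding aa bb using m0 w0 assms(2) by (simp add: x_def field_simps power2_eq_square)
      moreover have "\<omega>^2 / (x * r^2) > 0" using w0 x0 assms(2) by simp
      ultimately show ?thesis using F by (smt (verit) mult_pos_pos)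
    qed
    show "pi + \<gamma> * (pi * a + 6 * b) / (a^2 + b^2) > 0"
    proof -
      have "pi + \<gamma> * (pi * a + 6 * b) / (a^2 + b^2) = (pi * (a^2 + b^2) + \<gamma> * (pi * a + 6 * b)) / (a^2 + b^2)"
        using pos by (simp only: add_divide_distrib nonzero_mult_div_cancel_right less_imp_neq[OF pos, symmetric] not_False_eq_True)
      then show ?thesis using key pos by simp
    qed
  qed
qed

end
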